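(* Let $V$ be a finite set of variables, let $D_{\mathit{dag}}$ be the ABA framework defined in the context, and let $\sigma\in\{\text{preferred},\text{stable}\}$. Then each directed acyclic graph $G$ with node set $V$ corresponds to a unique $S\in\sigma(D_{\mathit{dag}})$ and vice versa, where $S$ corresponds to the graph $(V,\{(x,y)\mid \mathit{arr}_{xy}\in S\})$.
   Context: Assumption-based argumentation (ABA). An ABA framework is a tuple $D=(\mathcal L,\mathcal R,\mathcal A,\overline{\cdot})$ with sentences $\mathcal L$, rules $\mathcal R$ of the form $a_0\leftarrow a_1,\dots,a_n$ ($n\ge0$), assumptions $\mathcal A\subseteq\mathcal L$ and contrary function $\overline{\cdot}:\mathcal A\to\mathcal L$. For $S\subseteq\mathcal A$, $S\vdash q$ if there is a finite rooted labelled tree with root $q$, set of leaf labels $S$ or $S\cup\{\top\}$, and every inner node labelled by the head of some rule whose children are labelled by the distinct body elements of that rule (a single child $\top$ for an empty body). $S$ attacks $T$ if some $S'\subseteq S$ derives $\overline a$ for some $a\in T$. $S$ is conflict-free if it does not attack itself; it defends $T$ if it attacks every attacker of $T$; admissible if conflict-free and self-defending; complete if admissible and contains every assumption set it defends; preferred if $\subseteq$-maximal complete; stable if admissible and it attacks $\{a\}$ for every assumption $a\notin S$. The framework $D_{\mathit{dag}}$: for a finite set $V$, assumptions are $\mathit{arr}_{xy}$ for all ordered pairs $x\ne y$ in $V$ and one assumption $\mathit{noe}_{xy}=\mathit{noe}_{yx}$ per unordered pair of distinct variables; each assumption $a$ has its own distinct fresh contrary $\overline a$; rules are (i) $\overline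 a\leftarrow b$ for all distinct $a,b\in\{\mathit{arr}_{xy},\mathit{arr}_{yx},\mathit{noe}_{xy}\}$; (ii) for every sequence $x_1\dots x_k$ of variables with consecutive elements distinct and $x_1=x_k$, and every $1\le i<k$, the rule $\overline{\mathit{arr}_{x_ix_{i+1}}}\leftarrow\mathit{arr}_{x_1x_2},\dots,\mathit{arr}_{x_{k-1}x_k}$. *)

theory Defs
  imports Main
begin

text \<open>A rule a0 <- a1,...,an is represented as the pair (a0, {a1,...,an}).\<close>
type_synonym 'l rule = "'l \<times> 'l set"

record 'l aba =
  lang  :: "'l set"
  rules :: "'l rule set"
  asms  :: "'l set"
  contr :: "'l \<Rightarrow> 'l"

text \<open>Finite rooted labelled trees; Top is the special label for empty rule bodies.\<close>
datatype 'l dtree = Top | Nd 'l "'l dtree list"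

fun root :: "'l dtree \<Rightarrow> 'l option" where
  "root Top = None"
| "root (Nd a _) = Some a"

fun leaves :: "'l dtree \<Rightarrow> 'l set" where
  "leaves Top = {}"
| "leaves (Nd a []) = {a}"
| "leaves (Nd a (t # ts)) = (\<Union>c\<in>set (t # ts). leaves c)"

fun valid_tree :: "'l rule set \<Rightarrow> 'l dtree \<Rightarrow> bool" where
  "valid_tree R Top = True"
| "valid_tree R (Nd a []) = True"
| "valid_tree R (Nd a (t # ts)) =
     ((t = Top \<and> ts = [] \<and> (a, {}) \<in> R) \<or>
      (\<exists>B. (a, B) \<in> R \<and> B \<noteq> {} \<and> distinct (map root (t # ts))
           \<and> set (map root (t # ts)) = Some ` B
           \<and> (\<forall>c\<in>set (t # ts). valid_tree R c)))"

definition derives :: "'l aba \<Rightarrow> 'l set \<Rightarrow> 'l \<Rightarrow> bool" where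
  "derives D S q \<longleftrightarrow> (\<exists>t. valid_tree (rules D) t \<and> root t = Some q \<and> leaves t = S)"

definition attacks :: "'l aba \<Rightarrow> 'l set \<Rightarrow> 'l set \<Rightarrow> bool" where
  "attacks D S T \<longleftrightarrow> (\<exists>S'\<subseteq>S. \<exists>a\<in>T. derives D S' (contr D a))"

definition conflict_free :: "'l aba \<Rightarrow> 'l set \<Rightarrow> bool" where
  "conflict_free D S \<longleftrightarrow> \<not> attacks D S S"

definition defends :: "'l aba \<Rightarrow> 'l set \<Rightarrow> 'l set \<Rightarrow> bool" where
  "defends D S T \<longleftrightarrow> (\<forall>U\<subseteq>asms D. attacks D U T \<longrightarrow> attacks D S U)"

definition admissible :: "'l aba \<Rightarrow> 'l set \<Rightarrow> bool" where
  "admissible D S \<longleftrightarrow> S \<subseteq> asms D \<and> conflict_free D S \<and> defends D S S"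

definition complete :: "'l aba \<Rightarrow> 'l set \<Rightarrow> bool" where
  "complete D S \<longleftrightarrow> admissible D S \<and> (\<forall>T\<subseteq>asms D. defends D S T \<longrightarrow> T \<subseteq> S)"

definition preferred :: "'l aba \<Rightarrow> 'l set \<Rightarrow> bool" where
  "preferred D S \<longleftrightarrow> complete D S \<and> \<not> (\<exists>S'. complete D S' \<and> S \<subset> S')"

definition stable :: "'l aba \<Rightarrow> 'l set \<Rightarrow> bool" where
  "stable D S \<longleftrightarrow> admissible D S \<and> (\<forall>a\<in>asms D - S. attacks D S {a})"

text \<open>noe_xy = noe_yx is represented by the unordered pair {x,y}.\<close>
datatype 'v dag_asm = Arr 'v 'v | Noe "'v set"

text \<open>Sentences: assumptions and their (distinct, fresh) contraries.\<close>
datatype 'v dag_sent = As "'v dag_asm" | Ct "'v dag_asm"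

definition dag_asms :: "'v set \<Rightarrow> 'v dag_asm set" where
  "dag_asms V = {Arr x y | x y. x \<in> V \<and> y \<in> V \<and> x \<noteq> y}
              \<union> {Noe {x, y} | x y. x \<in> V \<and> y \<in> V \<and> x \<noteq> y}"

definition dag_rules :: "'v set \<Rightarrow> 'v dag_sent rule set" where
  "dag_rules V =
     {(Ct a, {As b}) | a b x y. x \<in> V \<and> y \<in> V \<and> x \<noteq> y
         \<and> a \<in> {Arr x y, Arr y x, Noe {x, y}} \<and> b \<in> {Arr x y, Arr y x, Noe {x, y}} \<and> a \<noteq> b}
   \<union> {(Ct (Arr (xs ! i) (xs ! (i + 1))),
        {As (Arr (xs ! j) (xs ! (j + 1))) | j. j + 1 < length xs}) | xs i.
         set xs \<subseteq> V \<and> 2 \<le> length xs \<and> hd xs = last xs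
         \<and> (\<forall>j. j + 1 < length xs \<longrightarrow> xs ! j \<noteq> xs ! (j + 1))
         \<and> i + 1 < length xs}"

definition D_dag :: "'v set \<Rightarrow> 'v dag_sent aba" where
  "D_dag V = \<lparr> lang = As ` dag_asms V \<union> Ct ` dag_asms V,
               rules = dag_rules V,
               asms = As ` dag_asms V,
               contr = (\<lambda>s. case s of As a \<Rightarrow> Ct a | Ct a \<Rightarrow> Ct a) \<rparr>"

definition graph_of :: "'v dag_sent set \<Rightarrow> ('v \<times> 'v) set" where
  "graph_of S = {(x, y). As (Arr x y) \<in> S}"

end

theory Submission
  imports Defs
begin


definition triple :: "'v \<Rightarrow> 'v \<Rightarrow> 'v dag_asm set" where
  "triple x y = {Arr x y, Arr y x, Noe {x, y}}"

definition cycw :: "'v set \<Rightarrow> 'v list \<Rightarrow> bool" where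
  "cycw V xs \<longleftrightarrow> set xs \<subseteq> V \<and> 2 \<le> length xs \<and> hd xs = last xs
         \<and> (\<forall>j. j + 1 < length xs \<longrightarrow> xs ! j \<noteq> xs ! (j + 1))"

definition cbody :: "'v list \<Rightarrow> 'v dag_sent set" where
  "cbody xs = {As (Arr (xs ! j) (xs ! (j + 1))) | j. j + 1 < length xs}"

lemma rule_cases:
  assumes "(h, B) \<in> dag_rules V"
  shows "(\<exists>a b x y. h = Ct a \<and> B = {As b} \<and> x \<in> V \<and> y \<in> V \<and> x \<noteq> y \<and> a \<in> triple x y \<and> b \<in> triple x y \<and> a \<noteq> b)
       \<or> (\<exists>xs i. h = Ct (Arr (xs ! i) (xs ! (i + 1))) \<and> B = cbody xs \<and> cycw V xs \<and> i + 1 < length xs)"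
  using assms unfolding dag_rules_def triple_def cbody_def cycw_def by blast

lemma rule_i:
  "x \<in> V \<Longrightarrow> y \<in> V \<Longrightarrow> x \<noteq> y \<Longrightarrow> a \<in> triple x y \<Longrightarrow> b \<in> triple x y \<Longrightarrow> a \<noteq> b
   \<Longrightarrow> (Ct a, {As b}) \<in> dag_rules V"
  unfolding dag_rules_def triple_def by blast

lemma rule_ii:
  "cycw V xs \<Longrightarrow> i + 1 < length xs \<Longrightarrow> (Ct (Arr (xs ! i) (xs ! (i + 1))), cbody xs) \<in> dag_rules V"
  unfolding dag_rules_def cbody_def cycw_def by blast

lemma cbody_fin: "finite (cbody xs)"
proof -
  have "cbody xs = (\<lambda>j. As (Arr (xs ! j) (xs ! (j + 1)))) ` {j. j + 1 < length xs}"
    unfolding cbody_def by blast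
  moreover have "finite {j. j + 1 < length xs}" by (rule finite_subset[of _ "{..<length xs}"]) auto
  ultimately show ?thesis by simp
qed

lemma rule_body:
  assumes "(h, B) \<in> dag_rules V"
  shows "finite B \<and> B \<noteq> {} \<and> B \<subseteq> range As \<and> (\<exists>a. h = Ct a)"
  using rule_cases[OF assms]
proof
  assume "\<exists>xs i. h = Ct (Arr (xs ! i) (xs ! (i + 1))) \<and> B = cbody xs \<and> cycw V xs \<and> i + 1 < length xs"
  then obtain xs i where "h = Ct (Arr (xs ! i) (xs ! (i + 1)))" "B = cbody xs" "i + 1 < length xs" by blast
  then show ?thesis using cbody_fin unfolding cbody_def by auto
qed auto

lemma As_head: "(As b, B) \<notin> dag_rules V"
  using rule_body[of "As b" B V] by auto

lemma derives_iff:
  assumes "B \<subseteq> range As"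
  shows "derives (D_dag V) B (Ct a) \<longleftrightarrow> (Ct a, B) \<in> dag_rules V"
proof
  assume "derives (D_dag V) B (Ct a)"
  then obtain t where t: "valid_tree (dag_rules V) t" "root t = Some (Ct a)" "leaves t = B"
    unfolding derives_def D_dag_def by auto
  then obtain cs where tc: "t = Nd (Ct a) cs" by (cases t) auto
  show "(Ct a, B) \<in> dag_rules V"
  proof (cases cs)
    case Nil
    then show ?thesis using t tc assms by auto
  next
    case (Cons c cs')
    have "\<not> (c = Top \<and> cs' = [] \<and> (Ct a, {}) \<in> dag_rules V)" using rule_body by blast
    then obtain B' where B': "(Ct a, B') \<in> dag_rules V" "set (map root cs) = Some ` B'"
         "\<forall>c\<in>set cs. valid_tree (dag_rules V) c"
      using t(1) tc Cons by auto
    have Bs: "B' \<subseteq> range As" using rule_body[OF B'(1)] by blast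
    have lc: "leaves d = the ` {root d}" if "d \<in> set cs" for d
    proof -
      have "root d \<in> Some ` B'" using B'(2) that by auto
      then obtain b where b: "root d = Some b" "b \<in> B'" by auto
      then obtain b' where "b = As b'" using Bs by auto
      then obtain ds where d: "d = Nd (As b') ds" using b by (cases d) auto
      have "ds = []"
      proof (rule ccontr)
        assume "ds \<noteq> []"
        then obtain e es where "ds = e # es" by (cases ds) auto
        have "valid_tree (dag_rules V) d" using B'(3) that by blast
        then have "valid_tree (dag_rules V) (Nd (As b') (e # es))" using d \<open>ds = e # es\<close> by (simp only:)
        then show False using As_head[of b'] by (auto simp del: valid_tree.simps(2) simp add: valid_tree.simps(3))
      qed
      then show ?thesis using d by simp
    qed
    have "leaves t = (\<Union>d\<in>set cs. leaves d)" using tc Cons by simp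
    also have "\<dots> = (\<Union>d\<in>set cs. the ` {root d})" using lc by auto
    also have "\<dots> = the ` (root ` set cs)" by auto
    also have "\<dots> = B'" using B'(2) by (simp add: image_image)
    finally show ?thesis using t(3) B'(1) by simp
  qed
next
  assume r: "(Ct a, B) \<in> dag_rules V"
  then have "finite B" "B \<noteq> {}" using rule_body by blast+
  then obtain l where l: "set l = B" "distinct l" using finite_distinct_list by blast
  then obtain b l' where bl: "l = b # l'" using \<open>B \<noteq> {}\<close> by (cases l) auto
  let ?t = "Nd (Ct a) (map (\<lambda>b. Nd b []) l)"
  have "valid_tree (dag_rules V) ?t"
    using r l bl \<open>B \<noteq> {}\<close> by (auto simp: comp_def distinct_map)
  moreover have "leaves ?t = B" using l bl by auto
  ultimately show "derives (D_dag V) B (Ct a)" unfolding derives_def D_dag_def by force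
qed

lemma contr_D: "contr (D_dag V) (As a) = Ct a" "\<exists>c. contr (D_dag V) t = Ct c"
  unfolding D_dag_def by (auto split: dag_sent.splits)

lemma attacks_iff:
  assumes "S \<subseteq> range As"
  shows "attacks (D_dag V) S T \<longleftrightarrow> (\<exists>B\<subseteq>S. \<exists>t\<in>T. (contr (D_dag V) t, B) \<in> dag_rules V)"
proof -
  have "derives (D_dag V) B (contr (D_dag V) t) \<longleftrightarrow> (contr (D_dag V) t, B) \<in> dag_rules V"
    if "B \<subseteq> S" for B t
    using derives_iff[of B V] contr_D(2)[of V t] that assms by auto
  then show ?thesis unfolding attacks_def by blast
qed




definition amo :: "'v set \<Rightarrow> 'v dag_sent set \<Rightarrow> bool" where
  "amo V S \<longleftrightarrow> (\<forall>x y a b. x \<in> V \<longrightarrow> y \<in> V \<longrightarrow> x \<noteq> y \<longrightarrow> a \<in> triple x y \<longrightarrow> b \<in> triple x y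
      \<longrightarrow> a \<noteq> b \<longrightarrow> As a \<in> S \<longrightarrow> As b \<notin> S)"

definition cycf :: "'v set \<Rightarrow> 'v dag_sent set \<Rightarrow> bool" where
  "cycf V S \<longleftrightarrow> (\<forall>xs. cycw V xs \<longrightarrow> \<not> cbody xs \<subseteq> S)"

definition choice :: "'v set \<Rightarrow> 'v dag_sent set \<Rightarrow> bool" where
  "choice V S \<longleftrightarrow> (\<forall>x y. x \<in> V \<longrightarrow> y \<in> V \<longrightarrow> x \<noteq> y \<longrightarrow> (\<exists>a\<in>triple x y. As a \<in> S))"

lemma asms_D: "asms (D_dag V) = As ` dag_asms V"
  unfolding D_dag_def by simp

lemma cf_iff:
  assumes "S \<subseteq> As ` dag_asms V"
  shows "conflict_free (D_dag V) S \<longleftrightarrow> amo V S \<and> cycf V S"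
proof -
  have SA: "S \<subseteq> range As" using assms by auto
  have "conflict_free (D_dag V) S \<longleftrightarrow> \<not> (\<exists>B\<subseteq>S. \<exists>t\<in>S. (contr (D_dag V) t, B) \<in> dag_rules V)"
    unfolding conflict_free_def using attacks_iff[OF SA] by blast
  also have "\<dots> \<longleftrightarrow> amo V S \<and> cycf V S"
  proof
    assume H: "\<not> (\<exists>B\<subseteq>S. \<exists>t\<in>S. (contr (D_dag V) t, B) \<in> dag_rules V)"
    have "amo V S"
      unfolding amo_def
    proof (intro allI impI)
      fix x y a b
      assume h: "x \<in> V" "y \<in> V" "x \<noteq> y" "a \<in> triple x y" "b \<in> triple x y" "a \<noteq> b" "As a \<in> S"
      show "As b \<notin> S"
      proof
        assume "As b \<in> S"
        have r: "(contr (D_dag V) (As a), {As b}) \<in> dag_rules V" using rule_i[OF h(1-6)] contr_D(1)[of V a] by simp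
        have "{As b} \<subseteq> S" using \<open>As b \<in> S\<close> by simp
        then show False using H r h(7) by blast
      qed
    qed
    moreover have "cycf V S"
      unfolding cycf_def
    proof (intro allI impI notI)
      fix xs assume c: "cycw V xs" and sub: "cbody xs \<subseteq> S"
      have l: "0 + 1 < length xs" using c unfolding cycw_def by auto
      have "As (Arr (xs ! 0) (xs ! (0 + 1))) \<in> cbody xs" unfolding cbody_def using l by blast
      then have t: "As (Arr (xs ! 0) (xs ! (0 + 1))) \<in> S" using sub by blast
      have "(contr (D_dag V) (As (Arr (xs ! 0) (xs ! (0 + 1)))), cbody xs) \<in> dag_rules V" using rule_ii[OF c l] contr_D(1)[of V] by simp
      then show False using H t sub by blast
    qed
    ultimately show "amo V S \<and> cycf V S" ..
  next
    assume H: "amo V S \<and> cycf V S"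
    show "\<not> (\<exists>B\<subseteq>S. \<exists>t\<in>S. (contr (D_dag V) t, B) \<in> dag_rules V)"
    proof
      assume "\<exists>B\<subseteq>S. \<exists>t\<in>S. (contr (D_dag V) t, B) \<in> dag_rules V"
      then obtain B t where Bt: "B \<subseteq> S" "t \<in> S" "(contr (D_dag V) t, B) \<in> dag_rules V" by blast
      obtain a where ta: "t = As a" using Bt(2) SA by auto
      then have r: "(Ct a, B) \<in> dag_rules V" using Bt(3) contr_D(1)[of V] by simp
      show False using rule_cases[OF r]
      proof
        assume "\<exists>a' b x y. Ct a = Ct a' \<and> B = {As b} \<and> x \<in> V \<and> y \<in> V \<and> x \<noteq> y \<and> a' \<in> triple x y \<and> b \<in> triple x y \<and> a' \<noteq> b"
        then obtain a' b x y where "Ct a = Ct a'" "B = {As b}" "x \<in> V" "y \<in> V" "x \<noteq> y" "a' \<in> triple x y" "b \<in> triple x y" "a' \<noteq> b" by blast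
        moreover have "amo V S" using H by blast
        ultimately show False using Bt(1,2) ta unfolding amo_def by (metis dag_sent.inject(2) insert_subset)
      next
        assume "\<exists>xs i. Ct a = Ct (Arr (xs ! i) (xs ! (i + 1))) \<and> B = cbody xs \<and> cycw V xs \<and> i + 1 < length xs"
        then obtain xs where "B = cbody xs" "cycw V xs" by blast
        moreover have "cycf V S" using H by blast
        ultimately show False using Bt(1) unfolding cycf_def by blast
      qed
    qed
  qed
  finally show ?thesis .
qed

lemma G1:
  assumes "S \<subseteq> asms D" "conflict_free D S" "\<forall>a\<in>asms D - S. attacks D S {a}"
  shows "defends D S S"
  unfolding defends_def
proof (intro allI impI)
  fix U assume U: "U \<subseteq> asms D" "attacks D U S"
  then obtain B t where B: "B \<subseteq> U" "t \<in> S" "derives D B (contr D t)" unfolding attacks_def by blast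
  show "attacks D S U"
  proof (cases "B \<subseteq> S")
    case True
    then show ?thesis using assms(2) B unfolding conflict_free_def attacks_def by blast
  next
    case False
    then obtain u where "u \<in> B" "u \<notin> S" by blast
    then have "attacks D S {u}" using assms(3) U B by blast
    then show ?thesis using \<open>u \<in> B\<close> B(1) unfolding attacks_def by blast
  qed
qed

lemma G2:
  assumes "stable D S" shows "complete D S"
  unfolding complete_def
proof (intro conjI allI impI)
  show "admissible D S" using assms unfolding stable_def by blast
  fix T assume T: "T \<subseteq> asms D" "defends D S T"
  show "T \<subseteq> S"
  proof
    fix a assume "a \<in> T"
    show "a \<in> S"
    proof (rule ccontr)
      assume "a \<notin> S"
      then have "attacks D S {a}" using assms T \<open>a \<in> T\<close> unfolding stable_def by blast
      then obtain B where B: "B \<subseteq> S" "derives D B (contr D a)" unfolding attacks_def by blast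
      have BA: "B \<subseteq> asms D" using B assms unfolding stable_def admissible_def by blast
      have "attacks D B T" using B \<open>a \<in> T\<close> unfolding attacks_def by blast
      then have "attacks D S B" using T BA unfolding defends_def by blast
      then have "attacks D S S" using B(1) unfolding attacks_def by blast
      then show False using assms unfolding stable_def admissible_def conflict_free_def by blast
    qed
  qed
qed

lemma G3:
  assumes "stable D S" "complete D S'" "S \<subset> S'" shows False
proof -
  obtain a where a: "a \<in> S'" "a \<notin> S" using assms(3) by blast
  have "a \<in> asms D" using a assms(2) unfolding complete_def admissible_def by blast
  then have "attacks D S {a}" using assms(1) a unfolding stable_def by blast
  then have "attacks D S' S'" using assms(3) a unfolding attacks_def by blast
  then show False using assms(2) unfolding complete_def admissible_def conflict_free_def by blast
qed

lemma stable_preferred: "stable D S \<Longrightarrow> preferred D S"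
  unfolding preferred_def using G2 G3 by blast


lemma asm_Arr: "As (Arr x y) \<in> As ` dag_asms V \<longleftrightarrow> x \<in> V \<and> y \<in> V \<and> x \<noteq> y"
  unfolding dag_asms_def by auto

lemma asm_cases: "a \<in> dag_asms V \<Longrightarrow> \<exists>x y. x \<in> V \<and> y \<in> V \<and> x \<noteq> y \<and> a \<in> triple x y"
  unfolding dag_asms_def triple_def by auto

lemma triple_asms: "x \<in> V \<Longrightarrow> y \<in> V \<Longrightarrow> x \<noteq> y \<Longrightarrow> a \<in> triple x y \<Longrightarrow> a \<in> dag_asms V"
  unfolding dag_asms_def triple_def by auto

lemma Noe_triple: "Noe {x, y} \<in> triple x' y' \<Longrightarrow> triple x' y' = triple x y"
  unfolding triple_def by (auto simp: doubleton_eq_iff)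

lemma stable_iff:
  "stable (D_dag V) S \<longleftrightarrow> S \<subseteq> As ` dag_asms V \<and> amo V S \<and> cycf V S \<and> choice V S"
proof
  assume st: "stable (D_dag V) S"
  then have SA: "S \<subseteq> As ` dag_asms V" and cf: "conflict_free (D_dag V) S"
    unfolding stable_def admissible_def asms_D by auto
  then have ac: "amo V S" "cycf V S" using cf_iff by blast+
  have "choice V S"
    unfolding choice_def
  proof (intro allI impI)
    fix x y assume xy: "x \<in> V" "y \<in> V" "x \<noteq> y"
    show "\<exists>a\<in>triple x y. As a \<in> S"
    proof (rule ccontr)
      assume none: "\<not> (\<exists>a\<in>triple x y. As a \<in> S)"
      have n: "Noe {x, y} \<in> triple x y" unfolding triple_def by simp
      then have "As (Noe {x, y}) \<in> asms (D_dag V) - S"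
        using none triple_asms[OF xy n] asms_D by blast
      then have "attacks (D_dag V) S {As (Noe {x, y})}" using st unfolding stable_def by blast
      moreover have SR: "S \<subseteq> range As" using SA by blast
      ultimately have "\<exists>B\<subseteq>S. \<exists>t\<in>{As (Noe {x, y})}. (contr (D_dag V) t, B) \<in> dag_rules V"
        using attacks_iff[OF SR] by blast
      then obtain B where B: "B \<subseteq> S" "(contr (D_dag V) (As (Noe {x, y})), B) \<in> dag_rules V"
        by blast
      then have B2: "(Ct (Noe {x, y}), B) \<in> dag_rules V" using contr_D(1)[of V] by simp
      show False using rule_cases[OF B2]
      proof
        assume "\<exists>a b x' y'. Ct (Noe {x, y}) = Ct a \<and> B = {As b} \<and> x' \<in> V \<and> y' \<in> V \<and> x' \<noteq> y' \<and> a \<in> triple x' y' \<and> b \<in> triple x' y' \<and> a \<noteq> b"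
        then obtain b x' y' where bb: "B = {As b}" "Noe {x, y} \<in> triple x' y'" "b \<in> triple x' y'" by auto
        then have "b \<in> triple x y" using Noe_triple[OF bb(2)] by simp
        then show False using none B(1) bb(1) by blast
      next
        assume "\<exists>xs i. Ct (Noe {x, y}) = Ct (Arr (xs ! i) (xs ! (i + 1))) \<and> B = cbody xs \<and> cycw V xs \<and> i + 1 < length xs"
        then show False by simp
      qed
    qed
  qed
  then show "S \<subseteq> As ` dag_asms V \<and> amo V S \<and> cycf V S \<and> choice V S" using SA ac by blast
next
  assume H: "S \<subseteq> As ` dag_asms V \<and> amo V S \<and> cycf V S \<and> choice V S"
  then have SA: "S \<subseteq> As ` dag_asms V" and cf: "conflict_free (D_dag V) S" using cf_iff by blast+
  have att: "\<forall>a\<in>asms (D_dag V) - S. attacks (D_dag V) S {a}"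
  proof
    fix a assume a: "a \<in> asms (D_dag V) - S"
    then obtain a0 where a0: "a = As a0" "a0 \<in> dag_asms V" using asms_D by auto
    then obtain x y where xy: "x \<in> V" "y \<in> V" "x \<noteq> y" "a0 \<in> triple x y" using asm_cases by blast
    then obtain b where b: "b \<in> triple x y" "As b \<in> S" using H unfolding choice_def by blast
    have "b \<noteq> a0" using a a0 b by auto
    then have r: "(contr (D_dag V) a, {As b}) \<in> dag_rules V"
      using rule_i[OF xy(1-4) b(1)] a0 contr_D(1)[of V] by simp
    show "attacks (D_dag V) S {a}"
      using r b(2) attacks_iff[of S V "{a}"] SA by blast
  qed
  have "defends (D_dag V) S S" using G1[of S "D_dag V"] SA cf att asms_D by blast
  then show "stable (D_dag V) S" unfolding stable_def admissible_def using SA cf att asms_D by blast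
qed

lemma extend:
  assumes "S \<subseteq> As ` dag_asms V" "conflict_free (D_dag V) S"
  shows "\<exists>S'. S \<subseteq> S' \<and> stable (D_dag V) S'"
proof -
  define N where "N = {As (Noe {x, y}) | x y. x \<in> V \<and> y \<in> V \<and> x \<noteq> y \<and> (\<forall>a\<in>triple x y. As a \<notin> S)}"
  define S' where "S' = S \<union> N"
  have ac: "amo V S" "cycf V S" using assms cf_iff by blast+
  have NA: "N \<subseteq> As ` dag_asms V"
  proof
    fix n assume "n \<in> N"
    then obtain x y where "n = As (Noe {x, y})" "x \<in> V" "y \<in> V" "x \<noteq> y" unfolding N_def by blast
    moreover have "Noe {x, y} \<in> triple x y" unfolding triple_def by simp
    ultimately show "n \<in> As ` dag_asms V" using triple_asms[of x V y "Noe {x, y}"] by simp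
  qed
  have Nmem: "\<exists>x y. c = Noe {x, y} \<and> (\<forall>e\<in>triple x y. As e \<notin> S)" if "As c \<in> N" for c
    using that unfolding N_def by auto
  have "S' \<subseteq> As ` dag_asms V" unfolding S'_def using assms(1) NA by blast
  moreover have "amo V S'"
    unfolding amo_def
  proof (intro allI impI notI)
    fix x y a b
    assume h: "x \<in> V" "y \<in> V" "x \<noteq> y" "a \<in> triple x y" "b \<in> triple x y" "a \<noteq> b" "As a \<in> S'" "As b \<in> S'"
    have key: False if c: "c \<in> triple x y" "d \<in> triple x y" "c \<noteq> d" "As c \<in> N" "As d \<in> S'" for c d
    proof -
      obtain x' y' where c1: "c = Noe {x', y'}" "\<forall>e\<in>triple x' y'. As e \<notin> S" using Nmem[OF c(4)] by blast
      have tt: "triple x y = triple x' y'"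
        using Noe_triple[of x' y' x y] c1(1) c(1) by simp
      have "As d \<notin> S" using tt c1(2) c(2) by blast
      then have "As d \<in> N" using c(5) unfolding S'_def by blast
      then obtain x'' y'' where d1: "d = Noe {x'', y''}" using Nmem by blast
      have "triple x y = triple x'' y''" using Noe_triple[of x'' y'' x y] c(2) d1 by simp
      have "Noe {x, y} = c" using c(1) c1(1) unfolding triple_def by auto
      moreover have "Noe {x, y} = d" using c(2) d1 unfolding triple_def by auto
      ultimately show False using c(3) by simp
    qed
    show False
    proof (cases "As a \<in> N")
      case True
      then show ?thesis using key[of a b] h by blast
    next
      case False
      then have aS: "As a \<in> S" using h(7) unfolding S'_def by blast
      show ?thesis
      proof (cases "As b \<in> N")
        case True
        then show ?thesis using key[of b a] h by blast
      next
        case False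
        then have "As b \<in> S" using h(8) unfolding S'_def by blast
        then show ?thesis using ac(1) h(1-6) aS unfolding amo_def by blast
      qed
    qed
  qed
  moreover have "cycf V S'"
    unfolding cycf_def
  proof (intro allI impI notI)
    fix xs assume c: "cycw V xs" "cbody xs \<subseteq> S'"
    have "cbody xs \<inter> N = {}" unfolding cbody_def N_def by blast
    then have "cbody xs \<subseteq> S" using c(2) unfolding S'_def by blast
    then show False using ac(2) c(1) unfolding cycf_def by blast
  qed
  moreover have "choice V S'"
    unfolding choice_def
  proof (intro allI impI)
    fix x y assume xy: "x \<in> V" "y \<in> V" "x \<noteq> y"
    show "\<exists>a\<in>triple x y. As a \<in> S'"
    proof (cases "\<exists>a\<in>triple x y. As a \<in> S")
      case True then show ?thesis unfolding S'_def by blast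
    next
      case False
      then have "As (Noe {x, y}) \<in> N" unfolding N_def using xy by blast
      moreover have "Noe {x, y} \<in> triple x y" unfolding triple_def by simp
      ultimately show ?thesis unfolding S'_def by blast
    qed
  qed
  ultimately have "stable (D_dag V) S'" using stable_iff by blast
  then show ?thesis unfolding S'_def by blast
qed

lemma preferred_stable:
  assumes "preferred (D_dag V) S" shows "stable (D_dag V) S"
proof -
  have SA: "S \<subseteq> As ` dag_asms V" "conflict_free (D_dag V) S"
    using assms unfolding preferred_def complete_def admissible_def asms_D by blast+
  obtain S' where S': "S \<subseteq> S'" "stable (D_dag V) S'" using extend[OF SA] by blast
  have "complete (D_dag V) S'" using G2 S'(2) by blast
  then have "S = S'" using assms S'(1) unfolding preferred_def by blast
  then show ?thesis using S' by simp
qed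

lemma sigma_iff:
  assumes "\<sigma> \<in> {preferred, stable}"
  shows "\<sigma> (D_dag V) S \<longleftrightarrow> stable (D_dag V) S"
  using assms preferred_stable stable_preferred by blast


lemma walk_trancl:
  "2 \<le> length xs \<Longrightarrow> (\<forall>j. j + 1 < length xs \<longrightarrow> (xs ! j, xs ! (j + 1)) \<in> E) \<Longrightarrow> (hd xs, last xs) \<in> E\<^sup>+"
proof (induction xs)
  case Nil then show ?case by simp
next
  case (Cons x xs)
  then obtain y ys where xs: "xs = y # ys" by (cases xs) auto
  have e0: "(x, y) \<in> E" using Cons.prems(2) xs by force
  show ?case
  proof (cases ys)
    case Nil
    then show ?thesis using e0 xs by auto
  next
    case (Cons z zs)
    have "\<forall>j. j + 1 < length xs \<longrightarrow> (xs ! j, xs ! (j + 1)) \<in> E"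
    proof (intro allI impI)
      fix j assume "j + 1 < length xs"
      then have "Suc j + 1 < length (x # xs)" by simp
      then have "((x # xs) ! Suc j, (x # xs) ! (Suc j + 1)) \<in> E" using Cons.prems(2) by blast
      then show "(xs ! j, xs ! (j + 1)) \<in> E" by simp
    qed
    moreover have "2 \<le> length xs" using xs Cons by simp
    ultimately have "(hd xs, last xs) \<in> E\<^sup>+" using Cons.IH by blast
    then show ?thesis using e0 xs by auto
  qed
qed

lemma trancl_walk:
  assumes "(x, y) \<in> E\<^sup>+" "E \<subseteq> V \<times> V"
  shows "\<exists>xs. set xs \<subseteq> V \<and> 2 \<le> length xs \<and> hd xs = x \<and> last xs = y
           \<and> (\<forall>j. j + 1 < length xs \<longrightarrow> (xs ! j, xs ! (j + 1)) \<in> E)"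
  using assms(1)
proof (induction rule: converse_trancl_induct)
  case (base x)
  have "(\<forall>j. j + 1 < length [x, y] \<longrightarrow> ([x, y] ! j, [x, y] ! (j + 1)) \<in> E)"
    using base by (auto simp: less_Suc_eq)
  then show ?case using base assms(2) by (intro exI[of _ "[x, y]"]) auto
next
  case (step x z)
  then obtain ys where ys: "set ys \<subseteq> V" "2 \<le> length ys" "hd ys = z" "last ys = y"
    "\<forall>j. j + 1 < length ys \<longrightarrow> (ys ! j, ys ! (j + 1)) \<in> E" by blast
  then obtain w ws where yw: "ys = w # ws" by (cases ys) auto
  have "\<forall>j. j + 1 < length (x # ys) \<longrightarrow> ((x # ys) ! j, (x # ys) ! (j + 1)) \<in> E"
  proof (intro allI impI)
    fix j assume j: "j + 1 < length (x # ys)"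
    show "((x # ys) ! j, (x # ys) ! (j + 1)) \<in> E"
    proof (cases j)
      case 0 then show ?thesis using step(1) ys(3) yw by simp
    next
      case (Suc k) then show ?thesis using ys(5) j by simp
    qed
  qed
  moreover have "x \<in> V" using step(1) assms(2) by blast
  ultimately show ?case using ys yw by (intro exI[of _ "x # ys"]) auto
qed

lemma graph_ok:
  assumes "S \<subseteq> As ` dag_asms V" "cycf V S"
  shows "graph_of S \<subseteq> V \<times> V \<and> acyclic (graph_of S)"
proof -
  have E: "(u, v) \<in> graph_of S \<Longrightarrow> u \<in> V \<and> v \<in> V \<and> u \<noteq> v" for u v
    using assms(1) asm_Arr[of u v V] unfolding graph_of_def by blast
  then have EV: "graph_of S \<subseteq> V \<times> V" by auto
  have "(x, x) \<notin> (graph_of S)\<^sup>+" for x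
  proof
    assume "(x, x) \<in> (graph_of S)\<^sup>+"
    then obtain xs where xs: "set xs \<subseteq> V" "2 \<le> length xs" "hd xs = x" "last xs = x"
      "\<forall>j. j + 1 < length xs \<longrightarrow> (xs ! j, xs ! (j + 1)) \<in> graph_of S"
      using trancl_walk[OF _ EV] by blast
    have "cycw V xs" unfolding cycw_def using xs E by auto
    moreover have "cbody xs \<subseteq> S" unfolding cbody_def using xs(5) unfolding graph_of_def by auto
    ultimately show False using assms(2) unfolding cycf_def by blast
  qed
  then show ?thesis using EV unfolding acyclic_def by blast
qed

definition SE :: "'v set \<Rightarrow> ('v \<times> 'v) set \<Rightarrow> 'v dag_sent set" where
  "SE V E = {As (Arr x y) | x y. (x, y) \<in> E}
     \<union> {As (Noe {x, y}) | x y. x \<in> V \<and> y \<in> V \<and> x \<noteq> y \<and> (x, y) \<notin> E \<and> (y, x) \<notin> E}"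

lemma SE_Arr: "As (Arr u v) \<in> SE V E \<longleftrightarrow> (u, v) \<in> E"
  unfolding SE_def by auto

lemma SE_Noe: "As (Noe {u, v}) \<in> SE V E \<longleftrightarrow> u \<in> V \<and> v \<in> V \<and> u \<noteq> v \<and> (u, v) \<notin> E \<and> (v, u) \<notin> E"
  unfolding SE_def by (auto simp: doubleton_eq_iff)

lemma SE_graph: "graph_of (SE V E) = E"
  unfolding graph_of_def by (auto simp: SE_Arr)

lemma SE_stable:
  assumes "E \<subseteq> V \<times> V" "acyclic E"
  shows "stable (D_dag V) (SE V E)"
proof -
  have irr: "(u, u) \<notin> E" for u using assms(2) unfolding acyclic_def by blast
  have asy: "(u, v) \<in> E \<Longrightarrow> (v, u) \<notin> E" for u v
    using assms(2) unfolding acyclic_def by (meson trancl.r_into_trancl trancl_into_trancl)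
  have "SE V E \<subseteq> As ` dag_asms V"
  proof
    fix s assume "s \<in> SE V E"
    then show "s \<in> As ` dag_asms V"
      unfolding SE_def using assms(1) irr asm_Arr[of _ _ V]
      by (auto simp: dag_asms_def)
  qed
  moreover have "amo V (SE V E)"
    unfolding amo_def triple_def
    using SE_Arr[of _ _ V E] SE_Noe[of _ _ V E] asy by auto
  moreover have "cycf V (SE V E)"
    unfolding cycf_def
  proof (intro allI impI notI)
    fix xs assume c: "cycw V xs" "cbody xs \<subseteq> SE V E"
    have "\<forall>j. j + 1 < length xs \<longrightarrow> (xs ! j, xs ! (j + 1)) \<in> E"
      using c(2) SE_Arr[of _ _ V E] unfolding cbody_def by blast
    then have "(hd xs, last xs) \<in> E\<^sup>+" using walk_trancl c(1) unfolding cycw_def by blast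
    then show False using c(1) assms(2) unfolding cycw_def acyclic_def by simp
  qed
  moreover have "choice V (SE V E)"
    unfolding choice_def triple_def
    using SE_Arr[of _ _ V E] SE_Noe[of _ _ V E] by auto
  ultimately show ?thesis using stable_iff by blast
qed

lemma stable_sub:
  assumes "stable (D_dag V) S1" "stable (D_dag V) S2" "graph_of S1 = graph_of S2"
  shows "S1 \<subseteq> S2"
proof
  fix s assume s: "s \<in> S1"
  have H1: "S1 \<subseteq> As ` dag_asms V" "amo V S1" and H2: "choice V S2"
    using assms(1,2) stable_iff by blast+
  obtain a where a: "s = As a" "a \<in> dag_asms V" using s H1(1) by blast
  show "s \<in> S2"
  proof (cases a)
    case (Arr u v)
    then have "(u, v) \<in> graph_of S1" using s a unfolding graph_of_def by simp
    then show ?thesis using assms(3) a Arr unfolding graph_of_def by simp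
  next
    case (Noe n)
    obtain x y where xy: "x \<in> V" "y \<in> V" "x \<noteq> y" "a \<in> triple x y" using asm_cases[OF a(2)] by blast
    then have n: "a = Noe {x, y}" using Noe unfolding triple_def by auto
    have t: "Arr x y \<in> triple x y" "Arr y x \<in> triple x y" unfolding triple_def by auto
    have "As (Arr x y) \<notin> S1" "As (Arr y x) \<notin> S1"
      using H1(2) xy t s a n unfolding amo_def by blast+
    then have "(x, y) \<notin> graph_of S2" "(y, x) \<notin> graph_of S2" using assms(3) unfolding graph_of_def by auto
    then have "As (Arr x y) \<notin> S2" "As (Arr y x) \<notin> S2" unfolding graph_of_def by auto
    moreover obtain b where "b \<in> triple x y" "As b \<in> S2" using H2 xy unfolding choice_def by blast
    ultimately show ?thesis using a n unfolding triple_def by auto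
  qed
qed

theorem corollary1:
  fixes V :: "'v set"
    and \<sigma> :: "'v dag_sent aba \<Rightarrow> 'v dag_sent set \<Rightarrow> bool"
  assumes "finite V"
    and "\<sigma> \<in> {preferred, stable}"
  shows "bij_betw graph_of {S. \<sigma> (D_dag V) S} {E. E \<subseteq> V \<times> V \<and> acyclic E}"
proof -
  have eq: "{S. \<sigma> (D_dag V) S} = {S. stable (D_dag V) S}" using sigma_iff[OF assms(2)] by blast
  have inj: "inj_on graph_of {S. stable (D_dag V) S}"
    unfolding inj_on_def using stable_sub by (metis mem_Collect_eq subset_antisym)
  have "graph_of ` {S. stable (D_dag V) S} \<subseteq> {E. E \<subseteq> V \<times> V \<and> acyclic E}"
    using graph_ok stable_iff by blast
  moreover have "{E. E \<subseteq> V \<times> V \<and> acyclic E} \<subseteq> graph_of ` {S. stable (D_dag V) S}"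
  proof
    fix E assume "E \<in> {E. E \<subseteq> V \<times> V \<and> acyclic E}"
    then have "stable (D_dag V) (SE V E)" using SE_stable by blast
    then show "E \<in> graph_of ` {S. stable (D_dag V) S}" using SE_graph[of V E] by (metis image_eqI mem_Collect_eq)
  qed
  ultimately show ?thesis unfolding bij_betw_def eq using inj by blast
qed

end
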